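(* Let $(Y_t,X_{t-\delta})$ and $(\tilde Y_0,\tilde X_{-\delta})$ be two pairs of random variables, each on $\mathcal Y\times\mathcal X$ with $\mathcal Y,\mathcal X$ finite, and let $L$ be a loss function on $\mathcal Y\times\mathcal A$. If for all $x\in\mathcal X$ $$D_{\chi^2}\big(P_{Y_t|X_{t-\delta}=x}\,\|\,P_{\tilde Y_0|\tilde X_{-\delta}=x}\big)\le\beta^2,$$ then $$H_L(Y_t;\tilde Y_0|X_{t-\delta})=H_L(Y_t|X_{t-\delta})+O(\beta).$$
   Context: $L:\mathcal Y\times\mathcal A\to\mathbb R$ is a loss function (minima attained). For a distribution $P$ on $\mathcal Y$, a Bayes action $a_P$ is a minimizer of $a\mapsto\mathbb E_{Y\sim P}[L(Y,a)]$. $H_L(Y|X=x)=\min_{a}\mathbb E_{Y\sim P_{Y|X=x}}[L(Y,a)]$ and $H_L(Y|X)=\sum_xP_X(x)H_L(Y|X=x)$. The $L$-conditional cross entropy is $H_L(Y_t;\tilde Y_0|X_{t-\delta})=\sum_{x\in\mathcal X}P_{X_{t-\delta}}(x)\,\mathbb E_{Y\sim P_{Y_t|X_{t-\delta}=x}}\big[L(Y,a_{P_{\tilde Y_0|\tilde X_{-\delta}=x}})\big]$. Neyman's $\chi^2$-divergence $D_{\chi^2}(P\|Q)=\sum_y\frac{(P(y)-Q(y))^2}{Q(y)}$ ($0^2/0=0$). Big-O is as $\beta\to0$. *)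

theory Defs
  imports "HOL-Analysis.Analysis"
begin

definition is_dist :: "('b::finite \<Rightarrow> real) \<Rightarrow> bool" where
  "is_dist p \<longleftrightarrow> (\<forall>y. 0 \<le> p y) \<and> (\<Sum>y\<in>UNIV. p y) = 1"

definition exp_loss :: "('y::finite \<Rightarrow> 'a \<Rightarrow> real) \<Rightarrow> ('y \<Rightarrow> real) \<Rightarrow> 'a \<Rightarrow> real" where
  "exp_loss L p a = (\<Sum>y\<in>UNIV. p y * L y a)"

definition is_bayes_action :: "('y::finite \<Rightarrow> 'a \<Rightarrow> real) \<Rightarrow> ('y \<Rightarrow> real) \<Rightarrow> 'a \<Rightarrow> bool" where
  "is_bayes_action L p a \<longleftrightarrow> (\<forall>a'. exp_loss L p a \<le> exp_loss L p a')"

definition minima_attained :: "('y::finite \<Rightarrow> 'a \<Rightarrow> real) \<Rightarrow> bool" where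
  "minima_attained L \<longleftrightarrow> (\<forall>p. is_dist p \<longrightarrow> (\<exists>a. is_bayes_action L p a))"

definition gen_ent :: "('y::finite \<Rightarrow> 'a \<Rightarrow> real) \<Rightarrow> ('y \<Rightarrow> real) \<Rightarrow> real" where
  "gen_ent L p = (INF a. exp_loss L p a)"

definition cond_gen_ent :: "('y::finite \<Rightarrow> 'a \<Rightarrow> real) \<Rightarrow> ('x::finite \<Rightarrow> real) \<Rightarrow> ('x \<Rightarrow> 'y \<Rightarrow> real) \<Rightarrow> real" where
  "cond_gen_ent L px pc = (\<Sum>x\<in>UNIV. px x * gen_ent L (pc x))"

text \<open>L-conditional cross entropy H_L(Y_t; Y~_0 | X_{t-delta}), where aq x is the
  (chosen) Bayes action of the conditional law of Y~_0 given X~_{-delta} = x.\<close>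
definition cond_cross_ent :: "('y::finite \<Rightarrow> 'a \<Rightarrow> real) \<Rightarrow> ('x::finite \<Rightarrow> real) \<Rightarrow> ('x \<Rightarrow> 'y \<Rightarrow> real) \<Rightarrow> ('x \<Rightarrow> 'a) \<Rightarrow> real" where
  "cond_cross_ent L px pc aq = (\<Sum>x\<in>UNIV. px x * exp_loss L (pc x) (aq x))"

text \<open>Neyman chi-square divergence, valued in ereal: infinite if P is not
  absolutely continuous w.r.t. Q (terms 0^2/0 count as 0).\<close>
definition chi2_div :: "('y::finite \<Rightarrow> real) \<Rightarrow> ('y \<Rightarrow> real) \<Rightarrow> ereal" where
  "chi2_div p q = (if \<exists>y. q y = 0 \<and> p y \<noteq> 0 then \<infinity>
     else ereal (\<Sum>y\<in>{y. q y \<noteq> 0}. (p y - q y)^2 / q y))"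

end

theory Submission
  imports Defs
begin

lemma gen_ent_eq:
  assumes "is_bayes_action L p b"
  shows "gen_ent L p = exp_loss L p b"
  unfolding gen_ent_def
  using assms unfolding is_bayes_action_def
  by (intro cInf_eq_minimum) auto

lemma dist_le1:
  fixes p :: "'y::finite \<Rightarrow> real"
  assumes "is_dist p" shows "p y \<le> 1"
proof -
  have "p y \<le> (\<Sum>z\<in>UNIV. p z)"
    using assms unfolding is_dist_def by (intro member_le_sum) auto
  then show ?thesis using assms unfolding is_dist_def by simp
qed

lemma min_point:
  fixes L :: "'y::finite \<Rightarrow> 'a \<Rightarrow> real"
  assumes "minima_attained L"
  shows "\<exists>mb. \<forall>y a'. L y (mb y) \<le> L y a'"
proof -
  have "\<forall>y::'y. \<exists>b. \<forall>a'. L y b \<le> L y a'"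
  proof
    fix y
    let ?d = "\<lambda>z::'y. if z = y then 1 else (0::real)"
    have "is_dist ?d" unfolding is_dist_def by auto
    then obtain b where b: "is_bayes_action L ?d b"
      using assms unfolding minima_attained_def by blast
    have e: "\<And>a. exp_loss L ?d a = L y a"
      unfolding exp_loss_def by (simp add: if_distrib[of "\<lambda>c. c * _"] cong: if_cong)
    show "\<exists>b. \<forall>a'. L y b \<le> L y a'"
      using b unfolding is_bayes_action_def e by blast
  qed
  then show ?thesis by metis
qed

lemma gap_bound:
  fixes L :: "'y::finite \<Rightarrow> 'a \<Rightarrow> real"
  assumes p: "is_dist p" and q: "is_dist q"
    and ba: "is_bayes_action L q a" and bb: "is_bayes_action L p b"
    and mb: "\<And>y a'. L y (mb y) \<le> L y a'"
    and close: "\<And>y. \<bar>p y - q y\<bar> \<le> \<beta>"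
    and supp: "\<And>y. q y = 0 \<Longrightarrow> p y = 0"
    and low: "\<And>y. q y \<noteq> 0 \<Longrightarrow> p y \<ge> \<mu>/2"
    and mu: "\<mu> > 0" and be: "\<beta> \<ge> 0"
  shows "exp_loss L p a - exp_loss L p b
     \<le> \<beta> * (1 + 2/\<mu>) * (\<Sum>y\<in>UNIV. \<bar>L y a\<bar> + \<bar>L y (mb y)\<bar>)"
proof -
  define l where "l y = L y b - L y (mb y)" for y
  have l0: "l y \<ge> 0" for y using mb unfolding l_def by simp
  have pn: "p y \<ge> 0" for y using p unfolding is_dist_def by simp
  have p1: "p y \<le> 1" for y using dist_le1[OF p] .
  have dec: "exp_loss L p a - exp_loss L p b =
     (\<Sum>y\<in>UNIV. (p y - q y) * L y a) + (exp_loss L q a - exp_loss L q b)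
     + (\<Sum>y\<in>UNIV. (q y - p y) * l y) + (\<Sum>y\<in>UNIV. (q y - p y) * L y (mb y))"
    unfolding exp_loss_def l_def
    by (simp add: algebra_simps sum_subtractf sum.distrib)
  have t2: "exp_loss L q a - exp_loss L q b \<le> 0"
    using ba unfolding is_bayes_action_def by simp
  have t1: "(\<Sum>y\<in>UNIV. (p y - q y) * L y a) \<le> \<beta> * (\<Sum>y\<in>UNIV. \<bar>L y a\<bar>)"
    unfolding sum_distrib_left
  proof (rule sum_mono)
    fix y
    have "(p y - q y) * L y a \<le> \<bar>p y - q y\<bar> * \<bar>L y a\<bar>"
      by (metis abs_ge_self abs_mult)
    also have "\<dots> \<le> \<beta> * \<bar>L y a\<bar>" using close[of y] by (intro mult_right_mono) auto
    finally show "(p y - q y) * L y a \<le> \<beta> * \<bar>L y a\<bar>" .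
  qed
  have t4: "(\<Sum>y\<in>UNIV. (q y - p y) * L y (mb y)) \<le> \<beta> * (\<Sum>y\<in>UNIV. \<bar>L y (mb y)\<bar>)"
    unfolding sum_distrib_left
  proof (rule sum_mono)
    fix y
    have "(q y - p y) * L y (mb y) \<le> \<bar>p y - q y\<bar> * \<bar>L y (mb y)\<bar>"
      by (metis abs_ge_self abs_mult abs_minus_commute)
    also have "\<dots> \<le> \<beta> * \<bar>L y (mb y)\<bar>" using close[of y] by (intro mult_right_mono) auto
    finally show "(q y - p y) * L y (mb y) \<le> \<beta> * \<bar>L y (mb y)\<bar>" .
  qed
  have t3a: "(\<Sum>y\<in>UNIV. (q y - p y) * l y) \<le> (\<Sum>y\<in>UNIV. (2*\<beta>/\<mu>) * (p y * l y))"
  proof (rule sum_mono)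
    fix y
    show "(q y - p y) * l y \<le> (2*\<beta>/\<mu>) * (p y * l y)"
    proof (cases "q y = 0")
      case True then show ?thesis using supp[of y] by simp
    next
      case False
      have "(q y - p y) * l y \<le> \<beta> * l y"
        using close[of y] l0[of y] by (intro mult_right_mono) auto
      also have "\<beta> * l y \<le> (2*\<beta>/\<mu>) * (p y * l y)"
      proof -
        have "1 \<le> 2 * p y / \<mu>" using low[OF False] mu by (simp add: field_simps)
        then have "\<beta> * l y * 1 \<le> \<beta> * l y * (2 * p y / \<mu>)"
          using be l0[of y] by (intro mult_left_mono) auto
        then show ?thesis by (simp add: field_simps)
      qed
      finally show ?thesis .
    qed
  qed
  have pl: "(\<Sum>y\<in>UNIV. p y * l y) \<le> (\<Sum>y\<in>UNIV. \<bar>L y a\<bar> + \<bar>L y (mb y)\<bar>)"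
  proof -
    have "(\<Sum>y\<in>UNIV. p y * l y) = exp_loss L p b - (\<Sum>y\<in>UNIV. p y * L y (mb y))"
      unfolding l_def exp_loss_def by (simp add: algebra_simps sum_subtractf)
    also have "\<dots> \<le> exp_loss L p a - (\<Sum>y\<in>UNIV. p y * L y (mb y))"
      using bb unfolding is_bayes_action_def by simp
    also have "\<dots> = (\<Sum>y\<in>UNIV. p y * (L y a - L y (mb y)))"
      unfolding exp_loss_def by (simp add: algebra_simps sum_subtractf)
    also have "\<dots> \<le> (\<Sum>y\<in>UNIV. \<bar>L y a\<bar> + \<bar>L y (mb y)\<bar>)"
    proof (rule sum_mono)
      fix y
      have "L y a - L y (mb y) \<ge> 0" using mb by simp
      then have "p y * (L y a - L y (mb y)) \<le> 1 * (L y a - L y (mb y))"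
        using p1[of y] by (intro mult_right_mono) auto
      moreover have "L y a - L y (mb y) \<le> \<bar>L y a\<bar> + \<bar>L y (mb y)\<bar>" by (simp add: abs_if)
      ultimately show "p y * (L y a - L y (mb y)) \<le> \<bar>L y a\<bar> + \<bar>L y (mb y)\<bar>" by simp
    qed
    finally show ?thesis .
  qed
  have t3: "(\<Sum>y\<in>UNIV. (q y - p y) * l y) \<le> (2*\<beta>/\<mu>) * (\<Sum>y\<in>UNIV. \<bar>L y a\<bar> + \<bar>L y (mb y)\<bar>)"
  proof -
    have "(\<Sum>y\<in>UNIV. (2*\<beta>/\<mu>) * (p y * l y)) = (2*\<beta>/\<mu>) * (\<Sum>y\<in>UNIV. p y * l y)"
      by (simp add: sum_distrib_left)
    also have "\<dots> \<le> (2*\<beta>/\<mu>) * (\<Sum>y\<in>UNIV. \<bar>L y a\<bar> + \<bar>L y (mb y)\<bar>)"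
      using pl be mu by (intro mult_left_mono) auto
    finally show ?thesis using t3a by linarith
  qed
  have "\<beta> * (1 + 2/\<mu>) * (\<Sum>y\<in>UNIV. \<bar>L y a\<bar> + \<bar>L y (mb y)\<bar>)
     = \<beta> * (\<Sum>y\<in>UNIV. \<bar>L y a\<bar>) + \<beta> * (\<Sum>y\<in>UNIV. \<bar>L y (mb y)\<bar>)
       + (2*\<beta>/\<mu>) * (\<Sum>y\<in>UNIV. \<bar>L y a\<bar> + \<bar>L y (mb y)\<bar>)"
    by (simp add: sum.distrib algebra_simps)
  then show ?thesis using dec t1 t2 t3 t4 by linarith
qed


lemma chi2_facts:
  fixes p q :: "'y::finite \<Rightarrow> real"
  assumes c: "chi2_div p q \<le> ereal (\<beta>^2)" and b: "\<beta> > 0" and q: "is_dist q"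
  shows "\<And>y. q y = 0 \<Longrightarrow> p y = 0" and "\<And>y. \<bar>p y - q y\<bar> \<le> \<beta>"
proof -
  have nz: "\<not> (\<exists>y. q y = 0 \<and> p y \<noteq> 0)"
    using c unfolding chi2_div_def by (auto split: if_splits)
  then show "\<And>y. q y = 0 \<Longrightarrow> p y = 0" by blast
  have s: "(\<Sum>y\<in>{y. q y \<noteq> 0}. (p y - q y)^2 / q y) \<le> \<beta>^2"
    using c nz unfolding chi2_div_def by simp
  have qn: "q y \<ge> 0" for y using q unfolding is_dist_def by simp
  have q1: "q y \<le> 1" for y using dist_le1[OF q] .
  fix y
  show "\<bar>p y - q y\<bar> \<le> \<beta>"
  proof (cases "q y = 0")
    case True then show ?thesis using nz b by auto
  next
    case False
    then have qp: "q y > 0" using qn[of y] by simp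
    have "(p y - q y)^2 / q y \<le> (\<Sum>y\<in>{y. q y \<noteq> 0}. (p y - q y)^2 / q y)"
      using False qn by (intro member_le_sum) auto
    with s have "(p y - q y)^2 / q y \<le> \<beta>^2" by linarith
    then have "(p y - q y)^2 \<le> \<beta>^2 * q y" using qp by (simp add: field_simps)
    also have "\<dots> \<le> \<beta>^2" using q1[of y] by (simp add: mult_left_le)
    finally have "(p y - q y)^2 \<le> \<beta>^2" .
    then show ?thesis using b by (metis abs_le_square_iff abs_of_pos)
  qed
qed

theorem lemma3p7:
  fixes L :: "'y::finite \<Rightarrow> 'a \<Rightarrow> real"
    and qc :: "'x::finite \<Rightarrow> 'y \<Rightarrow> real"
    and aq :: "'x \<Rightarrow> 'a"
  assumes "minima_attained L"
    and "\<And>x. is_dist (qc x)"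
    and "\<And>x. is_bayes_action L (qc x) (aq x)"
  shows "\<exists>C \<beta>0. \<beta>0 > 0 \<and>
    (\<forall>\<beta> px pc. 0 < \<beta> \<and> \<beta> < \<beta>0 \<and> is_dist px \<and> (\<forall>x. is_dist (pc x)) \<and>
        (\<forall>x. chi2_div (pc x) (qc x) \<le> ereal (\<beta>^2)) \<longrightarrow>
      \<bar>cond_cross_ent L px pc aq - cond_gen_ent L px pc\<bar> \<le> C * \<beta>)"
proof -
  obtain mb where mb: "\<And>y a'. L y (mb y) \<le> L y a'"
    using min_point[OF assms(1)] by blast
  define S where "S = {qc x y | x y. qc x y > 0} \<union> {1}"
  define \<mu> where "\<mu> = Min S"
  have finS: "finite S"
  proof -
    have "{qc x y | x y. qc x y > 0} \<subseteq> (\<lambda>(x,y). qc x y) ` UNIV" by auto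
    moreover have "finite ((\<lambda>(x,y). qc x y) ` (UNIV :: ('x \<times> 'y) set))" by simp
    ultimately show ?thesis unfolding S_def using finite_subset by blast
  qed
  have mupos: "\<mu> > 0"
    unfolding \<mu>_def using finS by (subst Min_gr_iff) (auto simp: S_def)
  have mule: "qc x y > 0 \<Longrightarrow> \<mu> \<le> qc x y" for x y
    unfolding \<mu>_def using finS by (intro Min_le) (auto simp: S_def)
  define K where "K x = (\<Sum>y\<in>UNIV. \<bar>L y (aq x)\<bar> + \<bar>L y (mb y)\<bar>)" for x
  define C where "C = (\<Sum>x\<in>UNIV. (1 + 2/\<mu>) * K x)"
  have K0: "K x \<ge> 0" for x unfolding K_def by (intro sum_nonneg) auto
  show ?thesis
  proof (intro exI conjI allI impI)
    show "\<mu>/2 > 0" using mupos by simp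
    fix \<beta> and px :: "'x \<Rightarrow> real"  and pc :: "'x \<Rightarrow> 'y \<Rightarrow> real"
    assume H: "0 < \<beta> \<and> \<beta> < \<mu>/2 \<and> is_dist px \<and> (\<forall>x. is_dist (pc x)) \<and>
        (\<forall>x. chi2_div (pc x) (qc x) \<le> ereal (\<beta>^2))"
    have "\<forall>x. \<exists>b. is_bayes_action L (pc x) b"
      using H assms(1) unfolding minima_attained_def by blast
    then obtain b where b: "\<And>x. is_bayes_action L (pc x) (b x)" by metis
    define G where "G x = exp_loss L (pc x) (aq x) - gen_ent L (pc x)" for x
    have G0: "G x \<ge> 0" for x
      unfolding G_def gen_ent_eq[OF b[of x]] using b[of x] unfolding is_bayes_action_def by simp
    have Gle: "G x \<le> \<beta> * ((1 + 2/\<mu>) * K x)" for x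
    proof -
      have cf1: "\<And>y. qc x y = 0 \<Longrightarrow> pc x y = 0" and cf2: "\<And>y. \<bar>pc x y - qc x y\<bar> \<le> \<beta>"
        using chi2_facts[of "pc x" "qc x" \<beta>] H assms(2) by auto
      have low: "pc x y \<ge> \<mu>/2" if "qc x y \<noteq> 0" for y
      proof -
        have "qc x y \<ge> 0" using assms(2)[of x] unfolding is_dist_def by simp
        with that have "qc x y > 0" by simp
        then have "\<mu> \<le> qc x y" by (rule mule)
        with cf2[of y] H show ?thesis by (auto simp: abs_le_iff)
      qed
      have "G x \<le> \<beta> * (1 + 2/\<mu>) * K x"
        unfolding G_def gen_ent_eq[OF b[of x]] K_def
        by (rule gap_bound[OF _ assms(2) assms(3) b mb cf2 cf1 low mupos]) (use H in auto)
      then show ?thesis by (simp add: algebra_simps)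
    qed
    have "cond_cross_ent L px pc aq - cond_gen_ent L px pc = (\<Sum>x\<in>UNIV. px x * G x)"
      unfolding cond_cross_ent_def cond_gen_ent_def G_def
      by (simp add: algebra_simps sum_subtractf)
    moreover have "(\<Sum>x\<in>UNIV. px x * G x) \<ge> 0"
      using H G0 unfolding is_dist_def by (intro sum_nonneg) auto
    moreover have "(\<Sum>x\<in>UNIV. px x * G x) \<le> (\<Sum>x\<in>UNIV. \<beta> * ((1 + 2/\<mu>) * K x))"
    proof (rule sum_mono)
      fix x
      have "px x * G x \<le> 1 * G x"
        using G0[of x] dist_le1[of px x] H by (intro mult_right_mono) auto
      then show "px x * G x \<le> \<beta> * ((1 + 2/\<mu>) * K x)" using Gle[of x] by simp
    qed
    moreover have "(\<Sum>x\<in>UNIV. \<beta> * ((1 + 2/\<mu>) * K x)) = C * \<beta>"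
      unfolding C_def by (simp add: sum_distrib_left mult.commute)
    ultimately show "\<bar>cond_cross_ent L px pc aq - cond_gen_ent L px pc\<bar> \<le> C * \<beta>"
      by simp
  qed
qed

end
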